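(* Let $m,n\ge 1$. For $i=1,\ldots,m$ let $f_i:\mathbb{R}^n\to\mathbb{R}$ be convex and let $h_i:\mathbb{R}^n\to\mathbb{R}$ be convex and differentiable with $\nabla h_i$ Lipschitz continuous with constant $L_i>0$; put $F:=\sum_{i=1}^m(f_i+h_i)$. Let $g:\mathbb{R}^n\to\mathbb{R}$ be convex and differentiable with $\nabla g$ Lipschitz continuous with constant $L_g>0$, and assume $\min g=0$. Let $\mathcal{S}$ be the (assumed nonempty) solution set of $\min\{F(x):x\in\arg\min g\}$. Let $(\alpha_k)_{k\ge1}$, $(\beta_k)_{k\ge1}$ be positive sequences satisfying (H1)–(H4) below, $x_1\in\mathbb{R}^n$, and for $k\ge1$ define $$\varphi_{1,k}:=x_k-\alpha_k\beta_k\nabla g(x_k),\qquad \varphi_{i+1,k}:=\operatorname{prox}_{\alpha_k f_i}\big(\varphi_{i,k}-\alpha_k\nabla h_i(\varphi_{i,k})\big)\ (i=1,\ldots,m),\qquad x_{k+1}:=\varphi_{m+1,k}.$$ (H1) $\partial\big(\sum_{i=1}^m f_i+\delta_{\arg\min g}\big)=\sum_{i=1}^m\partial f_i+N_{\arg\min g}$; (H2) $\sum_k\alpha_k=+\infty$, $\sum_k\alpha_k^2<+\infty$; (H3) $0<\liminf_k\alpha_k\beta_k\le\limsup_k\alpha_k\beta_k<2/L_g$; (H4) for every $p\in\operatorname{ran}(N_{\arg\min g})$, $\sum_k\alpha_k\beta_k[g^*(p/\beta_k)-\sigma_{\arg\min g}(p/\beta_k)]<+\infty$. Let $u\in\mathcal{S}$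 and $p\in N_{\arg\min g}(u)$ be such that $0=p+\sum_{i=1}^m v_i+\sum_{i=1}^m\nabla h_i(u)$, where $v_i\in\partial f_i(u)$ for all $i$. Then for every $k\ge1$ and every $\eta>0$, \begin{align*} &\|x_{k+1}-u\|^2-\|x_k-u\|^2+\tfrac{\eta}{1+\eta}\alpha_k\beta_k g(x_k)+\Big(1-\tfrac{\eta}{1+\eta}\Big)\sum_{i=1}^m\|\varphi_{i+1,k}-\varphi_{i,k}\|^2\\ &\le \alpha_k\Big(\tfrac{2(1+\eta)}{\eta}\alpha_k-\tfrac{2}{\max_{1\le i\le m}L_i}\Big)\sum_{i=1}^m\|\nabla h_i(\varphi_{i,k})-\nabla h_i(u)\|^2\\ &\quad+\Big(\Big(1+\tfrac{\eta}{2(1+\eta)}\Big)\alpha_k\beta_k-\tfrac{2}{L_g(1+\eta)}\Big)\alpha_k\beta_k\|\nabla g(x_k)\|^2\\ &\quad+\tfrac{2m(m+1)(1+\eta)}{\eta}\alpha_k^2\sum_{i=1}^m\|\nabla h_i(u)+v_i\|^2\\ &\quad+\tfrac{\eta}{1+\eta}\alpha_k\beta_k\Big[g^*\Big(\tfrac{2p}{\frac{\eta}{1+\eta}\beta_k}\Big)-\sigma_{\arg\min g}\Big(\tfrac{2p}{\frac{\eta}{1+\eta}\beta_k}\Big)\Big]. \end{align*}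
   Context: For $r>0$ and convex $f$, $\operatorname{prox}_{rf}(x)$ is the unique minimizer of $u\mapsto f(u)+\frac{1}{2r}\|u-x\|^2$. $g^*$ is the Fenchel conjugate of $g$. For a nonempty set $X$, $\delta_X$ is the indicator function, $N_X(x)=\{w:\langle w,y-x\rangle\le0\ \forall y\in X\}$ for $x\in X$ the normal cone, $\operatorname{ran}(N_X)=\bigcup_{x\in X}N_X(x)$, and $\sigma_X(w)=\sup_{y\in X}\langle y,w\rangle$ the support function. $\partial$ is the convex subdifferential. The hypotheses (H1)–(H4) are standing assumptions of the paper. *)

theory Defs
  imports "HOL-Analysis.Analysis"
begin

definition prox :: "real \<Rightarrow> ('a::euclidean_space \<Rightarrow> real) \<Rightarrow> 'a \<Rightarrow> 'a" where
  "prox r f x = (THE u. \<forall>y. f u + (norm (u - x))\<^sup>2 / (2 * r) \<le> f y + (norm (y - x))\<^sup>2 / (2 * r))"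

definition argmin_set :: "('a \<Rightarrow> real) \<Rightarrow> 'a set" where
  "argmin_set g = {x. \<forall>y. g x \<le> g y}"

definition indic :: "'a set \<Rightarrow> 'a \<Rightarrow> ereal" where
  "indic X x = (if x \<in> X then 0 else \<infinity>)"

definition subdiff :: "('a::real_inner \<Rightarrow> ereal) \<Rightarrow> 'a \<Rightarrow> 'a set" where
  "subdiff \<phi> x = {w. \<phi> x < \<infinity> \<and> (\<forall>y. \<phi> x + ereal (w \<bullet> (y - x)) \<le> \<phi> y)}"

definition normal_cone :: "'a::real_inner set \<Rightarrow> 'a \<Rightarrow> 'a set" where
  "normal_cone X x = (if x \<in> X then {w. \<forall>y\<in>X. w \<bullet> (y - x) \<le> 0} else {})"

definition ran_normal_cone :: "'a::real_inner set \<Rightarrow> 'a set" where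
  "ran_normal_cone X = (\<Union>x\<in>X. normal_cone X x)"

definition fconj :: "('a::real_inner \<Rightarrow> real) \<Rightarrow> 'a \<Rightarrow> ereal" where
  "fconj g p = (SUP y. ereal (p \<bullet> y - g y))"

definition support_fun :: "'a::real_inner set \<Rightarrow> 'a \<Rightarrow> ereal" where
  "support_fun X w = (SUP y\<in>X. ereal (y \<bullet> w))"

end

theory Submission
  imports Defs
begin

lemma line_deriv:
  fixes h :: "'a::euclidean_space \<Rightarrow> real"
  assumes "\<And>y. (h has_derivative (\<lambda>d. Dh y \<bullet> d)) (at y)"
  shows "((\<lambda>t. h (x + t *\<^sub>R d)) has_real_derivative (Dh (x + t *\<^sub>R d) \<bullet> d)) (at t)"
proof -
  have "((\<lambda>t. x + t *\<^sub>R d) has_derivative (\<lambda>s. s *\<^sub>R d)) (at t)"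
    by (auto intro!: derivative_eq_intros)
  from has_derivative_compose[OF this assms]
  have "((\<lambda>t. h (x + t *\<^sub>R d)) has_derivative (\<lambda>s. Dh (x + t *\<^sub>R d) \<bullet> (s *\<^sub>R d))) (at t)" .
  moreover have "(\<lambda>s. Dh (x + t *\<^sub>R d) \<bullet> (s *\<^sub>R d)) = (*) (Dh (x + t *\<^sub>R d) \<bullet> d)"
    by (auto simp: fun_eq_iff mult.commute)
  ultimately show ?thesis by (simp add: has_field_derivative_def)
qed

lemma descent:
  fixes h :: "'a::euclidean_space \<Rightarrow> real"
  assumes grad: "\<And>y. (h has_derivative (\<lambda>d. Dh y \<bullet> d)) (at y)"
    and lip: "L-lipschitz_on UNIV Dh"
  shows "h y \<le> h x + Dh x \<bullet> (y - x) + L / 2 * (norm (y - x))\<^sup>2"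
proof -
  define d where "d = y - x"
  define \<rho> where "\<rho> t = h (x + t *\<^sub>R d) - t * (Dh x \<bullet> d) - L / 2 * t\<^sup>2 * (norm d)\<^sup>2" for t
  have L0: "L \<ge> 0" using lip by (simp add: lipschitz_on_def)
  have "\<rho> 1 \<le> \<rho> 0"
  proof (rule DERIV_nonpos_imp_nonincreasing[of 0 1 \<rho>])
    fix t :: real assume t: "0 \<le> t" "t \<le> 1"
    have D: "(\<rho> has_real_derivative (Dh (x + t *\<^sub>R d) \<bullet> d - Dh x \<bullet> d - L * t * (norm d)\<^sup>2)) (at t)"
      unfolding \<rho>_def
      by (rule derivative_eq_intros line_deriv[OF grad] | simp)+
    have "(Dh (x + t *\<^sub>R d) - Dh x) \<bullet> d \<le> norm (Dh (x + t *\<^sub>R d) - Dh x) * norm d"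
      by (rule norm_cauchy_schwarz)
    also have "norm (Dh (x + t *\<^sub>R d) - Dh x) \<le> L * norm (t *\<^sub>R d)"
      using lip unfolding lipschitz_on_def by (metis UNIV_I dist_norm add_diff_cancel_left')
    hence "norm (Dh (x + t *\<^sub>R d) - Dh x) * norm d \<le> L * norm (t *\<^sub>R d) * norm d"
      by (simp add: mult_right_mono)
    also have "\<dots> = L * t * (norm d)\<^sup>2" using t by (simp add: power2_eq_square)
    finally have "Dh (x + t *\<^sub>R d) \<bullet> d - Dh x \<bullet> d - L * t * (norm d)\<^sup>2 \<le> 0"
      by (simp add: inner_diff_left)
    with D show "\<exists>y. DERIV \<rho> t :> y \<and> y \<le> 0" by blast
  qed simp
  thus ?thesis by (simp add: \<rho>_def d_def)
qed

lemma grad_ineq: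
  fixes h :: "'a::euclidean_space \<Rightarrow> real"
  assumes cv: "convex_on UNIV h" and grad: "\<And>y. (h has_derivative (\<lambda>d. Dh y \<bullet> d)) (at y)"
  shows "h x + Dh x \<bullet> (y - x) \<le> h y"
proof -
  define d where "d = y - x"
  define \<psi> where "\<psi> t = h (x + t *\<^sub>R d)" for t
  have cvp: "convex_on UNIV \<psi>"
  proof (rule convex_onI)
    fix t s r :: real assume "0 < t" "t < 1"
    have "x + ((1 - t) * s + t * r) *\<^sub>R d = (1 - t) *\<^sub>R (x + s *\<^sub>R d) + t *\<^sub>R (x + r *\<^sub>R d)"
      by (simp add: algebra_simps)
    then show "\<psi> ((1 - t) *\<^sub>R s + t *\<^sub>R r) \<le> (1 - t) * \<psi> s + t * \<psi> r"
      unfolding \<psi>_def using convex_onD[OF cv, of t] \<open>0 < t\<close> \<open>t < 1\<close> by simp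
  qed simp
  have D: "(\<psi> has_real_derivative (Dh x \<bullet> d)) (at 0 within UNIV)"
    unfolding \<psi>_def using line_deriv[OF grad, of x d 0] by simp
  have "\<psi> 1 - \<psi> 0 \<ge> (Dh x \<bullet> d) * (1 - 0)"
    by (rule convex_on_imp_above_tangent[OF cvp _ _ _ D]) auto
  thus ?thesis by (simp add: \<psi>_def d_def)
qed

lemma grad_ineq_strong:
  fixes h :: "'a::euclidean_space \<Rightarrow> real"
  assumes cv: "convex_on UNIV h" and grad: "\<And>y. (h has_derivative (\<lambda>d. Dh y \<bullet> d)) (at y)"
    and lip: "L-lipschitz_on UNIV Dh" and L: "L > 0"
  shows "h x + Dh x \<bullet> (z - x) + (norm (Dh z - Dh x))\<^sup>2 / (2 * L) \<le> h z"
proof -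
  define \<phi> where "\<phi> w = h w - Dh x \<bullet> w" for w
  define D\<phi> where "D\<phi> w = Dh w - Dh x" for w
  have g\<phi>: "(\<phi> has_derivative (\<lambda>d. D\<phi> w \<bullet> d)) (at w)" for w
  proof -
    have "(\<phi> has_derivative (\<lambda>d. Dh w \<bullet> d - Dh x \<bullet> d)) (at w)"
      unfolding \<phi>_def by (rule has_derivative_diff[OF grad]) (auto intro!: derivative_eq_intros)
    thus ?thesis by (simp add: D\<phi>_def inner_diff_left)
  qed
  have l\<phi>: "L-lipschitz_on UNIV D\<phi>"
    using lip by (simp add: lipschitz_on_def D\<phi>_def dist_norm)
  have min: "\<phi> x \<le> \<phi> w" for w
    using grad_ineq[OF cv grad, of x w] by (simp add: \<phi>_def inner_diff_right)
  define e where "e = D\<phi> z"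
  have ee: "D\<phi> z \<bullet> D\<phi> z = norm e * norm e" by (metis e_def dot_square_norm power2_eq_square)
  have "\<phi> x \<le> \<phi> (z - (1/L) *\<^sub>R e)" by (rule min)
  also have "\<dots> \<le> \<phi> z + D\<phi> z \<bullet> ((z - (1/L) *\<^sub>R e) - z) + L / 2 * (norm ((z - (1/L) *\<^sub>R e) - z))\<^sup>2"
    by (rule descent[OF g\<phi> l\<phi>])
  also have "\<dots> = \<phi> z - (norm e)\<^sup>2 / (2 * L)"
    using L by (simp add: e_def ee power2_eq_square field_simps)
  finally show ?thesis
    by (simp add: \<phi>_def e_def D\<phi>_def inner_diff_right)
qed

lemma cocoercive:
  fixes h :: "'a::euclidean_space \<Rightarrow> real"
  assumes cv: "convex_on UNIV h" and grad: "\<And>y. (h has_derivative (\<lambda>d. Dh y \<bullet> d)) (at y)"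
    and lip: "L-lipschitz_on UNIV Dh" and L: "L > 0"
  shows "(norm (Dh z - Dh x))\<^sup>2 / L \<le> (Dh z - Dh x) \<bullet> (z - x)"
proof -
  have 1: "h x + Dh x \<bullet> (z - x) + (norm (Dh z - Dh x))\<^sup>2 / (2 * L) \<le> h z"
    by (rule grad_ineq_strong[OF assms])
  have 2: "h z + Dh z \<bullet> (x - z) + (norm (Dh x - Dh z))\<^sup>2 / (2 * L) \<le> h x"
    by (rule grad_ineq_strong[OF assms])
  have "norm (Dh x - Dh z) = norm (Dh z - Dh x)" by (rule norm_minus_commute)
  with 1 2 have "(norm (Dh z - Dh x))\<^sup>2 / L \<le> Dh z \<bullet> (z - x) - Dh x \<bullet> (z - x)"
    by (simp add: inner_diff_right field_simps)
  thus ?thesis by (simp add: inner_diff_left)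
qed

lemma prox_exists:
  fixes f :: "'a::euclidean_space \<Rightarrow> real"
  assumes cv: "convex_on UNIV f" and r: "r > 0"
  shows "\<exists>u. \<forall>y. f u + (norm (u - x))\<^sup>2 / (2 * r) \<le> f y + (norm (y - x))\<^sup>2 / (2 * r)"
proof -
  define \<Phi> where "\<Phi> y = f y + (norm (y - x))\<^sup>2 / (2 * r)" for y
  have cf: "continuous_on UNIV f" by (rule convex_on_continuous[OF open_UNIV cv])
  have c\<Phi>U: "continuous_on UNIV \<Phi>" unfolding \<Phi>_def
    by (intro continuous_on_add cf continuous_on_divide continuous_on_power continuous_on_norm continuous_on_diff continuous_on_id continuous_on_const) (use r in auto)
  have c\<Phi>: "continuous_on A \<Phi>" for A using c\<Phi>U continuous_on_subset by blast
  have sne: "sphere x 1 \<noteq> {}" by simp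
  obtain z0 where "z0 \<in> sphere x 1" "\<forall>z\<in>sphere x 1. f z0 \<le> f z"
    using continuous_attains_inf[OF compact_sphere sne continuous_on_subset[OF cf subset_UNIV]] by blast
  then obtain c where c: "\<And>z. z \<in> sphere x 1 \<Longrightarrow> c \<le> f z" by blast
  define R where "R = 1 + 2 * r * \<bar>c - f x\<bar>"
  have R1: "R \<ge> 1" using r by (simp add: R_def)
  obtain u0 where u0: "u0 \<in> cball x R" "\<forall>y\<in>cball x R. \<Phi> u0 \<le> \<Phi> y"
  proof -
    have "cball x R \<noteq> {}" using R1 by simp
    from continuous_attains_inf[OF compact_cball this c\<Phi>] show ?thesis using that by blast
  qed
  have "\<Phi> u0 \<le> \<Phi> y" for y
  proof (cases "y \<in> cball x R")
    case True thus ?thesis using u0 by blast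
  next
    case False
    define t where "t = norm (y - x)"
    have tR: "t > R" using False by (simp add: t_def dist_norm norm_minus_commute)
    hence t1: "t > 0" "t \<ge> 1" using R1 by auto
    define z where "z = (1 - 1/t) *\<^sub>R x + (1/t) *\<^sub>R y"
    have "z - x = (1/t) *\<^sub>R (y - x)" by (simp add: z_def algebra_simps)
    hence "norm (z - x) = 1" using t1 by (simp add: t_def)
    hence "z \<in> sphere x 1" by (simp add: dist_norm norm_minus_commute)
    hence cz: "c \<le> f z" by (rule c)
    have "f z \<le> (1 - 1/t) * f x + (1/t) * f y"
      unfolding z_def by (rule convex_onD[OF cv]) (use t1 in auto)
    hence "t * f z \<le> t * ((1 - 1/t) * f x + (1/t) * f y)" using t1 by simp
    also have "\<dots> = (t - 1) * f x + f y" using t1 by (simp add: field_simps)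
    finally have A: "t * f z \<le> (t - 1) * f x + f y" .
    have "t * c \<le> t * f z" using cz t1 by simp
    with A have fy: "f x + t * (c - f x) \<le> f y" by (simp add: algebra_simps)
    have "2 * r * \<bar>c - f x\<bar> < t" using tR by (simp add: R_def)
    hence "\<bar>c - f x\<bar> < t / (2 * r)" using r by (simp add: field_simps)
    hence "- (t / (2 * r)) < c - f x" by linarith
    hence "t * (- (t / (2 * r))) < t * (c - f x)" using t1 by (intro mult_strict_left_mono) auto
    moreover have "t * (- (t / (2 * r))) = - (t\<^sup>2 / (2 * r))" by (simp add: power2_eq_square)
    ultimately have q: "0 < t * (c - f x) + t\<^sup>2 / (2 * r)" by linarith
    have "\<Phi> y = f y + t\<^sup>2 / (2 * r)" by (simp add: \<Phi>_def t_def)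
    moreover have "\<Phi> x = f x" by (simp add: \<Phi>_def)
    ultimately have "\<Phi> x < \<Phi> y" using fy q by linarith
    moreover have "\<Phi> u0 \<le> \<Phi> x" using u0 R1 by simp
    ultimately show ?thesis by simp
  qed
  thus ?thesis unfolding \<Phi>_def by blast
qed

lemma prox_char:
  fixes f :: "'a::euclidean_space \<Rightarrow> real"
  assumes cv: "convex_on UNIV f" and r: "r > 0"
  shows "f (prox r f x) + (norm (prox r f x - x))\<^sup>2 / (2 * r) \<le> f y + (norm (y - x))\<^sup>2 / (2 * r)"
proof -
  define P where "P u \<longleftrightarrow> (\<forall>y. f u + (norm (u - x))\<^sup>2 / (2 * r) \<le> f y + (norm (y - x))\<^sup>2 / (2 * r))" for u
  obtain u where u: "P u" using prox_exists[OF cv r, of x] by (auto simp: P_def)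
  have uniq: "w = u" if w: "P w" for w
  proof (rule ccontr)
    assume ne: "w \<noteq> u"
    define mid where "mid = (1/2) *\<^sub>R w + (1/2) *\<^sub>R u"
    have fm: "f mid \<le> (1/2) * f w + (1/2) * f u"
      using convex_onD[OF cv, of "1/2" w u] by (simp add: mid_def)
    have nm: "(norm (mid - x))\<^sup>2 = (1/2) * (norm (w - x))\<^sup>2 + (1/2) * (norm (u - x))\<^sup>2 - (1/4) * (norm (w - u))\<^sup>2"
      unfolding mid_def power2_norm_eq_inner
      by (simp add: inner_diff_left inner_diff_right inner_add_left inner_add_right inner_commute algebra_simps)
    have pos: "(norm (w - u))\<^sup>2 > 0" using ne by simp
    have "f mid + (norm (mid - x))\<^sup>2 / (2 * r) < (1/2) * (f w + (norm (w - x))\<^sup>2 / (2 * r)) + (1/2) * (f u + (norm (u - x))\<^sup>2 / (2 * r))"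
    proof -
      have e: "(norm (mid - x))\<^sup>2 / (2 * r) = (1/2) * ((norm (w - x))\<^sup>2 / (2 * r)) + (1/2) * ((norm (u - x))\<^sup>2 / (2 * r)) - (norm (w - u))\<^sup>2 / (8 * r)"
        unfolding nm using r by (simp add: diff_divide_distrib add_divide_distrib)
      have "(norm (w - u))\<^sup>2 / (8 * r) > 0" using pos r by simp
      with e fm show ?thesis unfolding distrib_left by linarith
    qed
    moreover have "f w + (norm (w - x))\<^sup>2 / (2 * r) \<le> f mid + (norm (mid - x))\<^sup>2 / (2 * r)"
      using w by (simp add: P_def)
    moreover have "f u + (norm (u - x))\<^sup>2 / (2 * r) \<le> f mid + (norm (mid - x))\<^sup>2 / (2 * r)"
      using u by (simp add: P_def)
    ultimately show False unfolding distrib_left by linarith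
  qed
  have "P (THE u. P u)" by (rule theI[of P u, OF u uniq])
  moreover have "prox r f x = (THE u. P u)" by (simp add: prox_def P_def)
  ultimately show ?thesis by (simp add: P_def)
qed

lemma small_t:
  fixes E K :: real
  assumes "\<And>t. 0 < t \<Longrightarrow> t \<le> 1 \<Longrightarrow> 0 \<le> E + t * K"
  shows "0 \<le> E"
proof (rule ccontr)
  assume E: "\<not> 0 \<le> E"
  show False
  proof (cases "K > 0")
    case True
    define t where "t = min 1 (- E / (2 * K))"
    have "- E / (2 * K) > 0" using E True by (intro divide_pos_pos) auto
    hence t: "0 < t" "t \<le> 1" by (auto simp: t_def)
    have "t * K \<le> (- E / (2 * K)) * K" using True by (intro mult_right_mono) (auto simp: t_def)
    also have "\<dots> = - E / 2" using True by simp
    finally show False using assms[OF t] E by linarith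
  next
    case False
    thus False using assms[of 1] E by simp
  qed
qed

lemma prox_subgrad:
  fixes f :: "'a::euclidean_space \<Rightarrow> real"
  assumes cv: "convex_on UNIV f" and r: "r > 0"
  shows "(x - prox r f x) \<bullet> (y - prox r f x) \<le> r * (f y - f (prox r f x))"
proof -
  define P where "P = prox r f x"
  define d where "d = y - P"
  have "0 \<le> (r * (f y - f P) - (x - P) \<bullet> d) + t * ((norm d)\<^sup>2 / 2)" if t: "0 < t" "t \<le> 1" for t
  proof -
    define A where "A = (norm (P - x))\<^sup>2"
    define B where "B = 2 * t * ((P - x) \<bullet> d) + t\<^sup>2 * (norm d)\<^sup>2"
    have n: "(norm ((P + t *\<^sub>R d) - x))\<^sup>2 = A + B"
      unfolding power2_norm_eq_inner A_def B_def
      by (simp add: inner_diff_left inner_diff_right inner_add_left inner_add_right inner_commute algebra_simps power2_eq_square)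
    have "f P + A / (2 * r) \<le> f (P + t *\<^sub>R d) + (A + B) / (2 * r)"
      using prox_char[OF cv r, of x "P + t *\<^sub>R d"] unfolding P_def[symmetric] n A_def .
    hence 1: "f P \<le> f (P + t *\<^sub>R d) + B / (2 * r)" by (simp add: add_divide_distrib)
    have 2: "f (P + t *\<^sub>R d) \<le> (1 - t) * f P + t * f y"
    proof -
      have "P + t *\<^sub>R d = (1 - t) *\<^sub>R P + t *\<^sub>R y" by (simp add: d_def algebra_simps)
      thus ?thesis using convex_onD[OF cv, of t P y] t by simp
    qed
    have "(1 - t) * f P + t * f y = f P + t * (f y - f P)" by (simp add: algebra_simps)
    with 1 2 have "0 \<le> t * (f y - f P) + (2 * t * ((P - x) \<bullet> d) + t\<^sup>2 * (norm d)\<^sup>2) / (2 * r)"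
      unfolding B_def by linarith
    hence "0 \<le> (2 * r) * (t * (f y - f P)) + (2 * t * ((P - x) \<bullet> d) + t\<^sup>2 * (norm d)\<^sup>2)"
      using r by (simp add: field_simps)
    also have "\<dots> = (2 * t) * ((r * (f y - f P) - (x - P) \<bullet> d) + t * ((norm d)\<^sup>2 / 2))"
      by (simp add: algebra_simps power2_eq_square inner_diff_left)
    finally show ?thesis using t by (simp add: zero_le_mult_iff)
  qed
  hence "0 \<le> r * (f y - f P) - (x - P) \<bullet> d" by (rule small_t)
  thus ?thesis by (simp add: P_def d_def)
qed

lemma young:
  fixes p q :: "'a::real_inner"
  assumes c: "c > 0"
  shows "2 * (p \<bullet> q) \<le> c * (norm p)\<^sup>2 + (norm q)\<^sup>2 / c"
proof -
  have "0 \<le> (norm (c *\<^sub>R p - q))\<^sup>2" by simp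
  also have "\<dots> = c\<^sup>2 * (norm p)\<^sup>2 - 2 * c * (p \<bullet> q) + (norm q)\<^sup>2"
    unfolding power2_norm_eq_inner
    by (simp add: inner_diff_left inner_diff_right inner_commute power2_eq_square algebra_simps)
  also have "\<dots> = c * (c * (norm p)\<^sup>2 + (norm q)\<^sup>2 / c - 2 * (p \<bullet> q))"
    using c by (simp add: field_simps power2_eq_square)
  finally have "0 \<le> c * (c * (norm p)\<^sup>2 + (norm q)\<^sup>2 / c - 2 * (p \<bullet> q))" .
  hence "0 \<le> c * (norm p)\<^sup>2 + (norm q)\<^sup>2 / c - 2 * (p \<bullet> q)" using c by (simp add: zero_le_mult_iff)
  thus ?thesis by simp
qed

lemma norm_sum_sq:
  fixes e :: "nat \<Rightarrow> 'a::real_normed_vector"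
  shows "(norm (\<Sum>j\<in>I. e j))\<^sup>2 \<le> real (card I) * (\<Sum>j\<in>I. (norm (e j))\<^sup>2)"
proof -
  have "(norm (\<Sum>j\<in>I. e j))\<^sup>2 \<le> (\<Sum>j\<in>I. norm (e j))\<^sup>2"
    by (intro power_mono norm_sum) simp
  also have "\<dots> \<le> (\<Sum>j\<in>I. (norm (e j))\<^sup>2) * card I" by (rule sum_squared_le_sum_of_squares)
  finally show ?thesis by (simp add: mult.commute)
qed

theorem lemmaA1:
  fixes m :: nat
    and f h :: "nat \<Rightarrow> 'a::euclidean_space \<Rightarrow> real"
    and Dh :: "nat \<Rightarrow> 'a \<Rightarrow> 'a"
    and L :: "nat \<Rightarrow> real"
    and g :: "'a \<Rightarrow> real" and Dg :: "'a \<Rightarrow> 'a" and Lg :: real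
    and \<alpha> \<beta> :: "nat \<Rightarrow> real"
    and x :: "nat \<Rightarrow> 'a" and \<phi> :: "nat \<Rightarrow> nat \<Rightarrow> 'a"
    and u p :: 'a and v :: "nat \<Rightarrow> 'a"
  assumes m: "m \<ge> 1"
    and f_conv: "\<And>i. i \<in> {1..m} \<Longrightarrow> convex_on UNIV (f i)"
    and h_conv: "\<And>i. i \<in> {1..m} \<Longrightarrow> convex_on UNIV (h i)"
    and h_grad: "\<And>i y. i \<in> {1..m} \<Longrightarrow> (h i has_derivative (\<lambda>d. Dh i y \<bullet> d)) (at y)"
    and L_pos: "\<And>i. i \<in> {1..m} \<Longrightarrow> L i > 0"
    and h_lip: "\<And>i. i \<in> {1..m} \<Longrightarrow> (L i)-lipschitz_on UNIV (Dh i)"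
    and g_conv: "convex_on UNIV g"
    and g_grad: "\<And>y. (g has_derivative (\<lambda>d. Dg y \<bullet> d)) (at y)"
    and Lg_pos: "Lg > 0"
    and g_lip: "Lg-lipschitz_on UNIV Dg"
    and g_min: "(\<exists>y. g y = 0) \<and> (\<forall>y. 0 \<le> g y)"
    and S_ne: "{z \<in> argmin_set g. \<forall>y \<in> argmin_set g.
                 (\<Sum>i=1..m. f i z + h i z) \<le> (\<Sum>i=1..m. f i y + h i y)} \<noteq> {}"
    and \<alpha>_pos: "\<And>k. k \<ge> 1 \<Longrightarrow> \<alpha> k > 0"
    and \<beta>_pos: "\<And>k. k \<ge> 1 \<Longrightarrow> \<beta> k > 0"
    and H1: "\<And>z. subdiff (\<lambda>y. ereal (\<Sum>i=1..m. f i y) + indic (argmin_set g) y) z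
               = {(\<Sum>i=1..m. w i) + q | w q.
                    (\<forall>i\<in>{1..m}. w i \<in> subdiff (\<lambda>y. ereal (f i y)) z)
                    \<and> q \<in> normal_cone (argmin_set g) z}"
    and H2a: "\<not> summable (\<lambda>k. \<alpha> (Suc k))"
    and H2b: "summable (\<lambda>k. (\<alpha> (Suc k))\<^sup>2)"
    and H3a: "0 < liminf (\<lambda>k. ereal (\<alpha> k * \<beta> k))"
    and H3b: "limsup (\<lambda>k. ereal (\<alpha> k * \<beta> k)) < ereal (2 / Lg)"
    and H4: "\<And>q. q \<in> ran_normal_cone (argmin_set g) \<Longrightarrow>
               (\<Sum>k. ereal (\<alpha> (Suc k) * \<beta> (Suc k)) *
                  (fconj g ((1 / \<beta> (Suc k)) *\<^sub>R q)
                   - support_fun (argmin_set g) ((1 / \<beta> (Suc k)) *\<^sub>R q))) < \<infinity>"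
    and phi1: "\<And>k. k \<ge> 1 \<Longrightarrow> \<phi> 1 k = x k - (\<alpha> k * \<beta> k) *\<^sub>R Dg (x k)"
    and phi_step: "\<And>i k. k \<ge> 1 \<Longrightarrow> i \<in> {1..m} \<Longrightarrow>
               \<phi> (i + 1) k = prox (\<alpha> k) (f i) (\<phi> i k - \<alpha> k *\<^sub>R Dh i (\<phi> i k))"
    and x_step: "\<And>k. k \<ge> 1 \<Longrightarrow> x (k + 1) = \<phi> (m + 1) k"
    and u_S: "u \<in> argmin_set g"
    and u_min: "\<forall>y \<in> argmin_set g. (\<Sum>i=1..m. f i u + h i u) \<le> (\<Sum>i=1..m. f i y + h i y)"
    and p_N: "p \<in> normal_cone (argmin_set g) u"
    and v_sub: "\<And>i. i \<in> {1..m} \<Longrightarrow> v i \<in> subdiff (\<lambda>y. ereal (f i y)) u"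
    and opt: "0 = p + (\<Sum>i=1..m. v i) + (\<Sum>i=1..m. Dh i u)"
  shows "\<forall>k \<ge> 1. \<forall>\<eta> > 0.
    ereal ((norm (x (k + 1) - u))\<^sup>2 - (norm (x k - u))\<^sup>2
       + \<eta> / (1 + \<eta>) * \<alpha> k * \<beta> k * g (x k)
       + (1 - \<eta> / (1 + \<eta>)) * (\<Sum>i=1..m. (norm (\<phi> (i + 1) k - \<phi> i k))\<^sup>2))
    \<le> ereal (\<alpha> k * (2 * (1 + \<eta>) / \<eta> * \<alpha> k - 2 / Max (L ` {1..m}))
               * (\<Sum>i=1..m. (norm (Dh i (\<phi> i k) - Dh i u))\<^sup>2)
          + ((1 + \<eta> / (2 * (1 + \<eta>))) * \<alpha> k * \<beta> k - 2 / (Lg * (1 + \<eta>)))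
               * \<alpha> k * \<beta> k * (norm (Dg (x k)))\<^sup>2
          + 2 * real m * (real m + 1) * (1 + \<eta>) / \<eta> * (\<alpha> k)\<^sup>2
               * (\<Sum>i=1..m. (norm (Dh i u + v i))\<^sup>2))
      + ereal (\<eta> / (1 + \<eta>) * \<alpha> k * \<beta> k)
          * (fconj g ((2 / (\<eta> / (1 + \<eta>) * \<beta> k)) *\<^sub>R p)
             - support_fun (argmin_set g) ((2 / (\<eta> / (1 + \<eta>) * \<beta> k)) *\<^sub>R p))"
proof (intro allI impI)
  fix k :: nat and \<eta> :: real
  assume k: "k \<ge> 1" and eta: "\<eta> > 0"
  define a where "a = \<alpha> k"
  define bb where "bb = \<alpha> k * \<beta> k"
  define \<epsilon> where "\<epsilon> = \<eta> / (1 + \<eta>)"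
  define X where "X = x k"
  define P where "P i = \<phi> i k" for i
  define G where "G = Dg X"
  define Lm where "Lm = Max (L ` {1..m})"
  define d where "d i = P (i+1) - P i" for i
  define \<Delta> where "\<Delta> i = Dh i (P i) - Dh i u" for i
  define w where "w i = Dh i u + v i" for i
  define A where "A = 2 * real m * (real m + 1) * (1 + \<eta>) / \<eta>"
  define SD where "SD = (\<Sum>i=1..m. (norm (d i))\<^sup>2)"
  define SDD where "SDD = (\<Sum>i=1..m. (norm (\<Delta> i))\<^sup>2)"
  define SW where "SW = (\<Sum>i=1..m. (norm (w i))\<^sup>2)"
  define K where "K = bb\<^sup>2 * (norm G)\<^sup>2 + SD"
  have a: "a > 0" using \<alpha>_pos k by (simp add: a_def)
  have bpos: "\<beta> k > 0" using \<beta>_pos k by simp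
  have bb: "bb > 0" using a bpos by (simp add: bb_def a_def)
  have \<epsilon>: "\<epsilon> > 0" "1 - \<epsilon> = 1 / (1 + \<eta>)" using eta by (auto simp: \<epsilon>_def field_simps)
  have Apos: "A > 0" using m eta by (auto simp: A_def)
  have mpos: "real m > 0" using m by simp
  have Aeq: "real m * (real m + 1) / A = \<epsilon> / 2"
  proof -
    have "real m * (real m + 1) / A = (real m * (real m + 1)) * \<eta> / ((real m * (real m + 1)) * (2 * (1 + \<eta>)))"
      by (simp add: A_def algebra_simps)
    also have "\<dots> = \<eta> / (2 * (1 + \<eta>))" using mpos eta by (subst mult_divide_mult_cancel_left) auto
    finally show ?thesis by (simp add: \<epsilon>_def)
  qed
  have Lm: "L i \<le> Lm" "0 < L i" if "i \<in> {1..m}" for i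
    using that L_pos by (auto simp: Lm_def intro!: Max_ge)
  have Dgu: "Dg u = 0"
  proof -
    define y where "y = u - (1/Lg) *\<^sub>R Dg u"
    have ee: "Dg u \<bullet> Dg u = (norm (Dg u))\<^sup>2" by (simp add: dot_square_norm)
    have "g y \<le> g u + Dg u \<bullet> (y - u) + Lg / 2 * (norm (y - u))\<^sup>2" by (rule descent[OF g_grad g_lip])
    also have "\<dots> = g u - (norm (Dg u))\<^sup>2 / (2 * Lg)"
      using Lg_pos by (simp add: y_def ee power2_eq_square field_simps)
    finally have "g y \<le> g u - (norm (Dg u))\<^sup>2 / (2 * Lg)" .
    moreover have "g u \<le> g y" using u_S by (simp add: argmin_set_def)
    ultimately have "(norm (Dg u))\<^sup>2 / (2 * Lg) \<le> 0" by linarith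
    hence "(norm (Dg u))\<^sup>2 \<le> 0" using Lg_pos by (simp add: divide_le_0_iff)
    thus ?thesis by simp
  qed
  have F1: "(norm (P (i+1) - u))\<^sup>2 - (norm (P i - u))\<^sup>2 + (norm (d i))\<^sup>2
     \<le> (2/\<epsilon> * a\<^sup>2 - 2*a/Lm) * (norm (\<Delta> i))\<^sup>2 + \<epsilon>/2 * (norm (d i))\<^sup>2 + 2*a * (w i \<bullet> (u - P (i+1)))"
    if i: "i \<in> {1..m}" for i
  proof -
    define z where "z = P i - a *\<^sub>R Dh i (P i)"
    have Pi1: "P (i+1) = prox a (f i) z" using phi_step[OF k i] by (simp add: P_def z_def a_def)
    have S1: "(z - P (i+1)) \<bullet> (u - P (i+1)) \<le> a * (f i u - f i (P (i+1)))"
      unfolding Pi1 by (rule prox_subgrad[OF f_conv[OF i] a])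
    have S2: "f i u + v i \<bullet> (P (i+1) - u) \<le> f i (P (i+1))"
      using v_sub[OF i] by (auto simp: subdiff_def)
    have S3: "(norm (\<Delta> i))\<^sup>2 / L i \<le> \<Delta> i \<bullet> (P i - u)"
      unfolding \<Delta>_def by (rule cocoercive[OF h_conv[OF i] h_grad[OF i] h_lip[OF i] L_pos[OF i]])
    have S4: "(norm (\<Delta> i))\<^sup>2 / Lm \<le> (norm (\<Delta> i))\<^sup>2 / L i"
      using Lm[OF i] by (intro divide_left_mono) auto
    have S5: "2 * ((a *\<^sub>R \<Delta> i) \<bullet> (P i - P (i+1))) \<le> (2/\<epsilon>) * (norm (a *\<^sub>R \<Delta> i))\<^sup>2 + (norm (P i - P (i+1)))\<^sup>2 / (2/\<epsilon>)"
      by (rule young) (use \<epsilon> in simp)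
    have Id: "2 * ((P i - P (i+1)) \<bullet> (u - P (i+1))) = (norm (d i))\<^sup>2 + (norm (P (i+1) - u))\<^sup>2 - (norm (P i - u))\<^sup>2"
      unfolding d_def power2_norm_eq_inner by (simp add: inner_diff_left inner_diff_right inner_commute algebra_simps)
    define T where "T = (P i - P (i+1)) \<bullet> (u - P (i+1))"
    define I1 where "I1 = Dh i (P i) \<bullet> (u - P (i+1))"
    define I2 where "I2 = v i \<bullet> (u - P (i+1))"
    define I3 where "I3 = w i \<bullet> (u - P (i+1))"
    define I4 where "I4 = \<Delta> i \<bullet> (P i - u)"
    define I5 where "I5 = \<Delta> i \<bullet> (P i - P (i+1))"
    define DDv where "DDv = (norm (\<Delta> i))\<^sup>2"
    define Ddv where "Ddv = (norm (d i))\<^sup>2"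
    have E1: "(z - P (i+1)) \<bullet> (u - P (i+1)) = T - a * I1"
      by (simp add: z_def T_def I1_def inner_diff_left)
    have E2: "v i \<bullet> (P (i+1) - u) = - I2"
      by (simp add: I2_def inner_diff_right)
    have E3: "I1 + I2 = I3 - I4 + I5"
      by (simp add: I1_def I2_def I3_def I4_def I5_def w_def \<Delta>_def inner_diff_left inner_diff_right inner_add_left algebra_simps)
    have E4: "(a *\<^sub>R \<Delta> i) \<bullet> (P i - P (i+1)) = a * I5" by (simp add: I5_def)
    have E5: "(norm (a *\<^sub>R \<Delta> i))\<^sup>2 = a\<^sup>2 * DDv" using a by (simp add: DDv_def power_mult_distrib)
    have E6: "(norm (P i - P (i+1)))\<^sup>2 / (2/\<epsilon>) = \<epsilon>/2 * Ddv"
      by (simp add: Ddv_def d_def norm_minus_commute)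
    have K1: "T \<le> a * I1 + a * (f i u - f i (P (i+1)))" using S1 E1 by linarith
    have "f i u - f i (P (i+1)) \<le> I2" using S2 E2 by linarith
    hence K2: "a * (f i u - f i (P (i+1))) \<le> a * I2" using a by (simp add: mult_left_mono)
    have "DDv / Lm \<le> I4" using S3 S4 by (simp add: DDv_def I4_def)
    hence K3: "a * (DDv / Lm) \<le> a * I4" using a by (intro mult_left_mono) auto
    have K4: "2 * (a * I5) \<le> 2/\<epsilon> * (a\<^sup>2 * DDv) + \<epsilon>/2 * Ddv" using S5 unfolding E4 E5 E6 .
    have K5: "a * I1 + a * I2 = a * I3 - a * I4 + a * I5"
    proof -
      have "a * I1 + a * I2 = a * (I1 + I2)" by (simp add: algebra_simps)
      also have "\<dots> = a * (I3 - I4 + I5)" using E3 by simp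
      finally show ?thesis by (simp add: algebra_simps)
    qed
    have K6: "(2/\<epsilon> * a\<^sup>2 - 2*a/Lm) * DDv = 2/\<epsilon> * (a\<^sup>2 * DDv) - 2 * (a * (DDv / Lm))"
      by (simp add: algebra_simps)
    have "2 * T \<le> 2 * (a * I3) - 2 * (a * (DDv / Lm)) + (2/\<epsilon> * (a\<^sup>2 * DDv) + \<epsilon>/2 * Ddv)"
      using K1 K2 K3 K4 K5 by linarith
    thus ?thesis using Id K6 unfolding T_def DDv_def Ddv_def I3_def by linarith
  qed
  have sumF1: "(\<Sum>i=1..m. (norm (P (i+1) - u))\<^sup>2 - (norm (P i - u))\<^sup>2 + (norm (d i))\<^sup>2)
      \<le> (\<Sum>i=1..m. (2/\<epsilon> * a\<^sup>2 - 2*a/Lm) * (norm (\<Delta> i))\<^sup>2 + \<epsilon>/2 * (norm (d i))\<^sup>2 + 2*a * (w i \<bullet> (u - P (i+1))))"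
    by (rule sum_mono) (rule F1)
  have tele: "(\<Sum>i=1..m. (norm (P (Suc i) - u))\<^sup>2 - (norm (P i - u))\<^sup>2) = (norm (P (Suc m) - u))\<^sup>2 - (norm (P 1 - u))\<^sup>2"
    by (rule sum_Suc_diff) simp
  have S: "(norm (P (Suc m) - u))\<^sup>2 - (norm (P 1 - u))\<^sup>2 + SD
      \<le> (2/\<epsilon> * a\<^sup>2 - 2*a/Lm) * SDD + \<epsilon>/2 * SD + 2*a * (\<Sum>i=1..m. w i \<bullet> (u - P (i+1)))"
    using sumF1 tele by (simp add: sum.distrib sum_subtractf sum_distrib_left SD_def SDD_def)
  have sumw: "(\<Sum>i=1..m. w i) = - p"
  proof -
    have "p + (\<Sum>i=1..m. w i) = 0" using opt by (simp add: w_def sum.distrib algebra_simps)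
    thus ?thesis by (simp add: add_eq_0_iff)
  qed
  have F3: "(\<Sum>i=1..m. w i \<bullet> (u - P (i+1))) = p \<bullet> (X - u) + (\<Sum>i=1..m. w i \<bullet> (X - P (i+1)))"
  proof -
    have "(\<Sum>i=1..m. w i \<bullet> (u - P (i+1))) = (\<Sum>i=1..m. w i \<bullet> (u - X) + w i \<bullet> (X - P (i+1)))"
      by (rule sum.cong) (auto simp: inner_diff_right)
    also have "\<dots> = (\<Sum>i=1..m. w i) \<bullet> (u - X) + (\<Sum>i=1..m. w i \<bullet> (X - P (i+1)))"
      by (simp add: sum.distrib inner_sum_left)
    also have "(\<Sum>i=1..m. w i) \<bullet> (u - X) = p \<bullet> (X - u)" unfolding sumw by (simp add: inner_diff_right)
    finally show ?thesis .
  qed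
  have P1: "P 1 = X - bb *\<^sub>R G" using phi1[OF k] by (simp add: P_def X_def bb_def G_def)
  have F4: "(norm (X - P (i+1)))\<^sup>2 \<le> (real m + 1) * K" if i: "i \<in> {1..m}" for i
  proof -
    define e where "e j = (if j = 0 then bb *\<^sub>R G else P j - P (Suc j))" for j
    have t1: "(\<Sum>j=1..i. P (Suc j) - P j) = P (Suc i) - P 1" by (rule sum_Suc_diff) simp
    have "(\<Sum>j=1..i. e j) = (\<Sum>j=1..i. - (P (Suc j) - P j))" by (rule sum.cong) (auto simp: e_def)
    also have "\<dots> = - (\<Sum>j=1..i. P (Suc j) - P j)" by (rule sum_negf)
    also have "\<dots> = P 1 - P (Suc i)" unfolding t1 by simp
    finally have t2: "(\<Sum>j=1..i. e j) = P 1 - P (Suc i)" .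
    have "(\<Sum>j=0..i. e j) = e 0 + (\<Sum>j=Suc 0..i. e j)" by (rule sum.atLeast_Suc_atMost) simp
    also have "\<dots> = X - P (i+1)" using t2 P1 by (simp add: e_def)
    finally have se: "(\<Sum>j=0..i. e j) = X - P (i+1)" .
    have n1: "(norm (X - P (i+1)))\<^sup>2 \<le> real (card {0..i}) * (\<Sum>j=0..i. (norm (e j))\<^sup>2)"
      unfolding se[symmetric] by (rule norm_sum_sq)
    have n2: "(\<Sum>j=0..i. (norm (e j))\<^sup>2) = (norm (e 0))\<^sup>2 + (\<Sum>j=Suc 0..i. (norm (e j))\<^sup>2)"
      by (rule sum.atLeast_Suc_atMost) simp
    have n3: "(\<Sum>j=Suc 0..i. (norm (e j))\<^sup>2) = (\<Sum>j=1..i. (norm (d j))\<^sup>2)"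
      by (rule sum.cong) (auto simp: e_def d_def norm_minus_commute)
    have "(\<Sum>j=1..i. (norm (d j))\<^sup>2) \<le> SD"
      unfolding SD_def using i by (intro sum_mono2) auto
    hence "(\<Sum>j=0..i. (norm (e j))\<^sup>2) \<le> K"
      unfolding n2 n3 using bb by (simp add: K_def e_def power_mult_distrib)
    moreover have "real (card {0..i}) \<le> real m + 1" using i by simp
    moreover have "0 \<le> (\<Sum>j=0..i. (norm (e j))\<^sup>2)" by (intro sum_nonneg) auto
    moreover have "0 \<le> K" unfolding K_def SD_def by (intro add_nonneg_nonneg sum_nonneg mult_nonneg_nonneg) auto
    ultimately have "real (card {0..i}) * (\<Sum>j=0..i. (norm (e j))\<^sup>2) \<le> (real m + 1) * K"
      by (intro mult_mono) auto
    with n1 show ?thesis by linarith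
  qed
  have F5i: "2 * a * (w i \<bullet> (X - P (i+1))) \<le> A * a\<^sup>2 * (norm (w i))\<^sup>2 + (real m + 1) * K / A"
    if i: "i \<in> {1..m}" for i
  proof -
    have "2 * ((a *\<^sub>R w i) \<bullet> (X - P (i+1))) \<le> A * (norm (a *\<^sub>R w i))\<^sup>2 + (norm (X - P (i+1)))\<^sup>2 / A"
      by (rule young[OF Apos])
    moreover have "(norm (X - P (i+1)))\<^sup>2 / A \<le> (real m + 1) * K / A"
      using F4[OF i] Apos by (intro divide_right_mono) auto
    moreover have "(norm (a *\<^sub>R w i))\<^sup>2 = a\<^sup>2 * (norm (w i))\<^sup>2" using a by (simp add: power_mult_distrib)
    ultimately show ?thesis by (simp add: algebra_simps)
  qed
  have F5: "2 * a * (\<Sum>i=1..m. w i \<bullet> (X - P (i+1))) \<le> A * a\<^sup>2 * SW + \<epsilon> / 2 * K"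
  proof -
    have "(\<Sum>i=1..m. 2 * a * (w i \<bullet> (X - P (i+1)))) \<le> (\<Sum>i=1..m. A * a\<^sup>2 * (norm (w i))\<^sup>2 + (real m + 1) * K / A)"
      by (rule sum_mono) (rule F5i)
    also have "\<dots> = A * a\<^sup>2 * SW + real m * ((real m + 1) * K / A)"
      by (simp add: sum.distrib sum_distrib_left SW_def)
    also have "real m * ((real m + 1) * K / A) = (real m * (real m + 1) / A) * K" by simp
    also have "\<dots> = \<epsilon> / 2 * K" by (simp add: Aeq)
    finally show ?thesis by (simp add: sum_distrib_left)
  qed
  have gu: "g u = 0"
  proof -
    obtain y0 where "g y0 = 0" using g_min by blast
    moreover have "g u \<le> g y0" using u_S by (simp add: argmin_set_def)
    ultimately show ?thesis using g_min by (metis order_antisym)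
  qed
  have \<epsilon>1: "\<epsilon> < 1" using eta by (simp add: \<epsilon>_def)
  have F7: "(norm (P 1 - u))\<^sup>2 \<le> (norm (X - u))\<^sup>2 - 2 * (\<epsilon> * bb * g X) - 2 * bb * ((1 - \<epsilon> / 2) * ((norm G)\<^sup>2 / Lg)) + bb\<^sup>2 * (norm G)\<^sup>2"
  proof -
    define g2 where "g2 = (norm G)\<^sup>2"
    define GX where "GX = G \<bullet> (X - u)"
    have E0: "(norm (P 1 - u))\<^sup>2 = (norm (X - u))\<^sup>2 - 2 * bb * GX + bb\<^sup>2 * g2"
      unfolding P1 power2_norm_eq_inner GX_def g2_def
      by (simp add: inner_diff_left inner_diff_right inner_commute algebra_simps power2_eq_square)
    have G2: "g2 / Lg \<le> GX"
      using cocoercive[OF g_conv g_grad g_lip Lg_pos, of X u] by (simp add: Dgu G_def g2_def GX_def)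
    have G1: "g X + g2 / (2 * Lg) \<le> GX"
    proof -
      have "g X + Dg X \<bullet> (u - X) + (norm (Dg u - Dg X))\<^sup>2 / (2 * Lg) \<le> g u"
        by (rule grad_ineq_strong[OF g_conv g_grad g_lip Lg_pos])
      moreover have "Dg X \<bullet> (u - X) = - GX" by (simp add: GX_def G_def inner_diff_right)
      moreover have "(norm (Dg u - Dg X))\<^sup>2 = g2" by (simp add: Dgu g2_def G_def)
      ultimately show ?thesis using gu by simp
    qed
    have "\<epsilon> * (g X + g2 / (2 * Lg)) \<le> \<epsilon> * GX" using G1 \<epsilon> by (intro mult_left_mono) auto
    moreover have "(1 - \<epsilon>) * (g2 / Lg) \<le> (1 - \<epsilon>) * GX" using G2 \<epsilon>1 by (intro mult_left_mono) auto
    moreover have "\<epsilon> * (g X + g2 / (2 * Lg)) + (1 - \<epsilon>) * (g2 / Lg) = \<epsilon> * g X + (1 - \<epsilon> / 2) * (g2 / Lg)"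
      using Lg_pos by (simp add: field_simps)
    ultimately have "\<epsilon> * g X + (1 - \<epsilon> / 2) * (g2 / Lg) \<le> GX" by (simp add: algebra_simps)
    hence "bb * (\<epsilon> * g X + (1 - \<epsilon> / 2) * (g2 / Lg)) \<le> bb * GX" using bb by (intro mult_left_mono) auto
    hence "\<epsilon> * bb * g X + bb * ((1 - \<epsilon> / 2) * (g2 / Lg)) \<le> bb * GX" by (simp add: algebra_simps)
    with E0 show ?thesis unfolding g2_def[symmetric] by linarith
  qed
  define q where "q = (2 / (\<eta> / (1 + \<eta>) * \<beta> k)) *\<^sub>R p"
  have qpos: "2 / (\<eta> / (1 + \<eta>) * \<beta> k) > 0" using eta bpos by simp
  define c where "c = 2 / (\<eta> / (1 + \<eta>) * \<beta> k)"
  have qc: "q = c *\<^sub>R p" by (simp add: q_def c_def)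
  have supp: "support_fun (argmin_set g) q = ereal (u \<bullet> q)"
    unfolding support_fun_def
  proof (rule antisym)
    show "(SUP y\<in>argmin_set g. ereal (y \<bullet> q)) \<le> ereal (u \<bullet> q)"
    proof (rule SUP_least)
      fix y assume y: "y \<in> argmin_set g"
      have "p \<bullet> (y - u) \<le> 0" using p_N u_S y by (auto simp: normal_cone_def)
      have "c * (p \<bullet> (y - u)) \<le> 0"
        using qpos \<open>p \<bullet> (y - u) \<le> 0\<close> unfolding c_def[symmetric] by (intro mult_nonneg_nonpos) auto
      moreover have "y \<bullet> q - u \<bullet> q = c * (p \<bullet> (y - u))"
        unfolding qc by (simp add: inner_diff_right inner_commute algebra_simps)
      ultimately have "y \<bullet> q \<le> u \<bullet> q" by linarith
      thus "ereal (y \<bullet> q) \<le> ereal (u \<bullet> q)" by simp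
    qed
    show "ereal (u \<bullet> q) \<le> (SUP y\<in>argmin_set g. ereal (y \<bullet> q))"
      using u_S by (rule SUP_upper)
  qed
  have fc: "ereal (q \<bullet> X - g X) \<le> fconj g q" unfolding fconj_def by (rule SUP_upper) simp
  have qX: "\<epsilon> * bb * (q \<bullet> X - q \<bullet> u) = 2 * a * (p \<bullet> (X - u))"
  proof -
    have "q \<bullet> X - q \<bullet> u = c * (p \<bullet> (X - u))"
      unfolding qc by (simp add: inner_diff_right algebra_simps)
    moreover have "\<epsilon> * bb * c = 2 * a"
      unfolding c_def \<epsilon>_def[symmetric] using \<epsilon>(1) bpos by (simp add: bb_def a_def field_simps)
    ultimately show ?thesis by (metis mult.assoc)
  qed
  have Fin: "(norm (P (Suc m) - u))\<^sup>2 - (norm (X - u))\<^sup>2 + \<eta> / (1 + \<eta>) * bb * g X + (1 - \<eta> / (1 + \<eta>)) * SD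
     \<le> a * (2 * (1 + \<eta>) / \<eta> * a - 2 / Lm) * SDD
       + ((1 + \<eta> / (2 * (1 + \<eta>))) * bb - 2 / (Lg * (1 + \<eta>))) * bb * (norm G)\<^sup>2
       + A * a\<^sup>2 * SW + \<eta> / (1 + \<eta>) * bb * (Fc - u \<bullet> q)"
    if Fc: "q \<bullet> X - g X \<le> Fc" for Fc
  proof -
    define g2 where "g2 = (norm G)\<^sup>2"
    have g2: "g2 \<ge> 0" by (simp add: g2_def)
    have Fen: "2 * a * (p \<bullet> (X - u)) \<le> \<epsilon> * bb * g X + \<epsilon> * bb * (Fc - u \<bullet> q)"
    proof -
      have "\<epsilon> * bb * (q \<bullet> X - q \<bullet> u - g X) \<le> \<epsilon> * bb * (Fc - u \<bullet> q)"
        using Fc \<epsilon> bb by (intro mult_left_mono) (auto simp: inner_commute)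
      thus ?thesis using qX by (simp add: algebra_simps)
    qed
    have Q1: "(2/\<epsilon> * a\<^sup>2 - 2*a/Lm) * SDD = a * (2 * (1 + \<eta>) / \<eta> * a - 2 / Lm) * SDD"
      using eta by (simp add: \<epsilon>_def power2_eq_square algebra_simps)
    have Q2: "((1 + \<eta> / (2 * (1 + \<eta>))) * bb - 2 / (Lg * (1 + \<eta>))) * bb * g2
              = bb\<^sup>2 * g2 + \<epsilon>/2 * (bb\<^sup>2 * g2) - 2 * bb * g2 / (Lg * (1 + \<eta>))"
      using eta by (simp add: \<epsilon>_def power2_eq_square algebra_simps)
    have Q3: "2 * bb * g2 / (Lg * (1 + \<eta>)) \<le> 2 * bb * ((1 - \<epsilon> / 2) * (g2 / Lg))"
    proof -
      have "1 / (1 + \<eta>) \<le> 1 - \<epsilon> / 2" using eta by (simp add: \<epsilon>_def field_simps)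
      hence "(2 * bb * (g2 / Lg)) * (1 / (1 + \<eta>)) \<le> (2 * bb * (g2 / Lg)) * (1 - \<epsilon> / 2)"
        using bb g2 Lg_pos by (intro mult_left_mono) auto
      moreover have "2 * bb * g2 / (Lg * (1 + \<eta>)) = (2 * bb * (g2 / Lg)) * (1 / (1 + \<eta>))" by simp
      moreover have "2 * bb * ((1 - \<epsilon> / 2) * (g2 / Lg)) = (2 * bb * (g2 / Lg)) * (1 - \<epsilon> / 2)" by simp
      ultimately show ?thesis by linarith
    qed
    have Q4: "\<epsilon> / 2 * K = \<epsilon>/2 * (bb\<^sup>2 * g2) + \<epsilon>/2 * SD" by (simp add: K_def g2_def algebra_simps)
    have Q5: "2 * a * (\<Sum>i=1..m. w i \<bullet> (u - P (i+1))) = 2 * a * (p \<bullet> (X - u)) + 2 * a * (\<Sum>i=1..m. w i \<bullet> (X - P (i+1)))"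
      unfolding F3 by (simp add: algebra_simps)
    have Q6: "1 - \<eta> / (1 + \<eta>) = 1 - \<epsilon>" by (simp add: \<epsilon>_def)
    have Q7: "(1 - \<epsilon>) * SD = SD - \<epsilon> / 2 * SD - \<epsilon> / 2 * SD" by (simp add: algebra_simps)
    have F7': "(norm (P 1 - u))\<^sup>2 \<le> (norm (X - u))\<^sup>2 - 2 * (\<epsilon> * bb * g X) - 2 * bb * ((1 - \<epsilon> / 2) * (g2 / Lg)) + bb\<^sup>2 * g2"
      using F7 by (simp add: g2_def)
    show ?thesis
      unfolding Q6 g2_def[symmetric] \<epsilon>_def[symmetric]
      using S Fen Q1 Q2 Q3 Q4 Q5 F5 F7' Q7 by linarith
  qed
  have xk1: "x (Suc k) = P (Suc m)" using x_step[OF k] by (simp add: P_def)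
  have lhs: "(norm (x (k + 1) - u))\<^sup>2 - (norm (x k - u))\<^sup>2
       + \<eta> / (1 + \<eta>) * \<alpha> k * \<beta> k * g (x k)
       + (1 - \<eta> / (1 + \<eta>)) * (\<Sum>i=1..m. (norm (\<phi> (i + 1) k - \<phi> i k))\<^sup>2)
     = (norm (P (Suc m) - u))\<^sup>2 - (norm (X - u))\<^sup>2 + \<eta> / (1 + \<eta>) * bb * g X + (1 - \<eta> / (1 + \<eta>)) * SD"
    by (simp add: xk1 X_def bb_def SD_def d_def P_def mult.assoc)
  have rhs: "\<alpha> k * (2 * (1 + \<eta>) / \<eta> * \<alpha> k - 2 / Max (L ` {1..m}))
               * (\<Sum>i=1..m. (norm (Dh i (\<phi> i k) - Dh i u))\<^sup>2)
          + ((1 + \<eta> / (2 * (1 + \<eta>))) * \<alpha> k * \<beta> k - 2 / (Lg * (1 + \<eta>)))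
               * \<alpha> k * \<beta> k * (norm (Dg (x k)))\<^sup>2
          + 2 * real m * (real m + 1) * (1 + \<eta>) / \<eta> * (\<alpha> k)\<^sup>2
               * (\<Sum>i=1..m. (norm (Dh i u + v i))\<^sup>2)
     = a * (2 * (1 + \<eta>) / \<eta> * a - 2 / Lm) * SDD
       + ((1 + \<eta> / (2 * (1 + \<eta>))) * bb - 2 / (Lg * (1 + \<eta>))) * bb * (norm G)\<^sup>2
       + A * a\<^sup>2 * SW"
    by (simp add: a_def bb_def Lm_def SDD_def \<Delta>_def P_def G_def X_def A_def SW_def w_def mult.assoc)
  have cpos: "\<eta> / (1 + \<eta>) * \<alpha> k * \<beta> k > 0" using eta bpos \<alpha>_pos k by simp
  have qq: "(2 / (\<eta> / (1 + \<eta>) * \<beta> k)) *\<^sub>R p = q" by (simp add: q_def)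
  have main: "ereal ((norm (P (Suc m) - u))\<^sup>2 - (norm (X - u))\<^sup>2 + \<eta> / (1 + \<eta>) * bb * g X + (1 - \<eta> / (1 + \<eta>)) * SD)
     \<le> ereal (a * (2 * (1 + \<eta>) / \<eta> * a - 2 / Lm) * SDD
       + ((1 + \<eta> / (2 * (1 + \<eta>))) * bb - 2 / (Lg * (1 + \<eta>))) * bb * (norm G)\<^sup>2
       + A * a\<^sup>2 * SW) + ereal (\<eta> / (1 + \<eta>) * \<alpha> k * \<beta> k) * (fconj g q - ereal (u \<bullet> q))"
  proof (cases "fconj g q")
    case (real Fc)
    have "q \<bullet> X - g X \<le> Fc" using fc real by simp
    from Fin[OF this] have "(norm (P (Suc m) - u))\<^sup>2 - (norm (X - u))\<^sup>2 + \<eta> / (1 + \<eta>) * bb * g X + (1 - \<eta> / (1 + \<eta>)) * SD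
      \<le> a * (2 * (1 + \<eta>) / \<eta> * a - 2 / Lm) * SDD
       + ((1 + \<eta> / (2 * (1 + \<eta>))) * bb - 2 / (Lg * (1 + \<eta>))) * bb * (norm G)\<^sup>2
       + A * a\<^sup>2 * SW + \<eta> / (1 + \<eta>) * \<alpha> k * \<beta> k * (Fc - u \<bullet> q)"
      by (simp add: bb_def mult.assoc)
    thus ?thesis using real by simp
  next
    case PInf
    have inf: "ereal (\<eta> / (1 + \<eta>) * \<alpha> k * \<beta> k) * (fconj g q - ereal (u \<bullet> q)) = \<infinity>"
      using cpos PInf eta bpos \<alpha>_pos[OF k] by (simp only: ereal_minus(5)) (simp add: ereal_mult_infty)
    show ?thesis unfolding inf by simp
  next
    case MInf
    thus ?thesis using fc by simp
  qed
  show "ereal ((norm (x (k + 1) - u))\<^sup>2 - (norm (x k - u))\<^sup>2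
       + \<eta> / (1 + \<eta>) * \<alpha> k * \<beta> k * g (x k)
       + (1 - \<eta> / (1 + \<eta>)) * (\<Sum>i=1..m. (norm (\<phi> (i + 1) k - \<phi> i k))\<^sup>2))
    \<le> ereal (\<alpha> k * (2 * (1 + \<eta>) / \<eta> * \<alpha> k - 2 / Max (L ` {1..m}))
               * (\<Sum>i=1..m. (norm (Dh i (\<phi> i k) - Dh i u))\<^sup>2)
          + ((1 + \<eta> / (2 * (1 + \<eta>))) * \<alpha> k * \<beta> k - 2 / (Lg * (1 + \<eta>)))
               * \<alpha> k * \<beta> k * (norm (Dg (x k)))\<^sup>2
          + 2 * real m * (real m + 1) * (1 + \<eta>) / \<eta> * (\<alpha> k)\<^sup>2
               * (\<Sum>i=1..m. (norm (Dh i u + v i))\<^sup>2))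
      + ereal (\<eta> / (1 + \<eta>) * \<alpha> k * \<beta> k)
          * (fconj g ((2 / (\<eta> / (1 + \<eta>) * \<beta> k)) *\<^sub>R p)
             - support_fun (argmin_set g) ((2 / (\<eta> / (1 + \<eta>) * \<beta> k)) *\<^sub>R p))"
    unfolding lhs rhs qq supp using main .
qed

end
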